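(* Let $k\in\mathbb{N}$, $\nu\ge0$, $\alpha>-1$, and let $(Q_n)_{n\in\mathbb{N}_0}$ be a sequence of real polynomials. The orthogonality $$\int_0^\infty Q_n(x)Q_m(x)\rho_{\nu,k}(x)x^\alpha\,dx=\delta_{m,n},\qquad m,n\in\mathbb{N}_0,$$ is equivalent to the composition orthogonality with respect to the weight $\rho_{\nu,k-1}$: $$\int_0^\infty\rho_{\nu,k-1}(t)\,Q_n(\theta)Q_m(\theta)\{t^\alpha\}\,dt=\frac{\delta_{m,n}}{\Gamma(1+\alpha)},\qquad m,n\in\mathbb{N}_0.$$ In particular, for $k=2$ the sequence is compositionally orthogonal with respect to the weight $\rho_{\nu,1}(t)=2t^{\nu/2}K_\nu(2\sqrt t)$ (in the sense of Prudnikov).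
   Context: For $x>0$, $\nu\ge0$, $k\in\mathbb{N}_0$, the ultra-exponential weight function is $$\rho_{\nu,k}(x)=\frac{1}{2\pi i}\int_{\gamma-i\infty}^{\gamma+i\infty}\Gamma(\nu+s)[\Gamma(s)]^kx^{-s}\,ds,\qquad\gamma>0;$$ thus $\rho_{\nu,0}(x)=x^\nu e^{-x}$ and $\rho_{\nu,1}(x)=2x^{\nu/2}K_\nu(2\sqrt x)$, with $K_\nu$ the modified Bessel function of the second kind. The operator $\theta=tDt$ acts by $(\theta f)(t)=t\frac{d}{dt}(tf(t))$; for a polynomial $Q(x)=\sum_jq_jx^j$, $Q(\theta)=\sum_jq_j\theta^j$, and $Q_n(\theta)Q_m(\theta)$ is the composition of operators; note $\theta^j\{t^\alpha\}=(1+\alpha)_jt^{\alpha+j}$. *)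

theory Defs
  imports "HOL-Analysis.Analysis" "HOL-Computational_Algebra.Polynomial"
begin

text \<open>Ultra-exponential weight rho_{nu,k}(x), defined as the inverse Mellin transform
  (1/(2 pi i)) int_{gamma - i inf}^{gamma + i inf} Gamma(nu+s) Gamma(s)^k x^(-s) ds
  on the vertical line gamma = 1 (the value is independent of gamma > 0).
  Parametrising s = 1 + i y gives ds = i dy, so the integral equals
  (1/(2 pi)) int_R Gamma(nu+1+iy) Gamma(1+iy)^k x^(-1-iy) dy, which is real.\<close>
definition rho_uexp :: "real \<Rightarrow> nat \<Rightarrow> real \<Rightarrow> real" where
  "rho_uexp \<nu> k x =
     Re (integral UNIV (\<lambda>y::real.
           Gamma (complex_of_real \<nu> + (1 + \<i> * complex_of_real y))
         * Gamma (1 + \<i> * complex_of_real y) ^ k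
         * complex_of_real x powr (- (1 + \<i> * complex_of_real y)))) / (2 * pi)"

definition theta_op :: "(real \<Rightarrow> real) \<Rightarrow> real \<Rightarrow> real" where
  "theta_op f t = t * deriv (\<lambda>s. s * f s) t"

definition poly_theta :: "real poly \<Rightarrow> (real \<Rightarrow> real) \<Rightarrow> real \<Rightarrow> real" where
  "poly_theta Q f = (\<lambda>t. \<Sum>j\<le>degree Q. coeff Q j * (theta_op ^^ j) f t)"

end

theory Submission
  imports Defs "HOL-Probability.Probability"
begin


lemma int_inv_sq: "integrable lborel (\<lambda>x::real. inverse (1 + x^2))"
  using integrable_inverse_1_plus_square by (simp add: set_integrable_def einterval_eq_UNIV)

lemma norm_Gamma_le:
  fixes z :: complex assumes z: "Re z > 0"
  shows "norm (Gamma z) \<le> Gamma (Re z)"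
proof -
  have A: "((\<lambda>t. of_real t powr (z - 1) / of_real (exp t)) has_integral Gamma z) {0..}"
    using Gamma_integral_complex[OF z] .
  have B': "((\<lambda>t. t powr (Re z - 1) / exp t) has_integral Gamma (Re z)) {0..}"
    using Gamma_integral_real[of "Re z"] z by simp
  have "norm (integral {0..} (\<lambda>t. of_real t powr (z - 1) / of_real (exp t))) \<le> integral {0..} (\<lambda>t. t powr (Re z - 1) / exp t)"
    apply (rule integral_norm_bound_integral)
    using A B' apply (auto simp: has_integral_integrable norm_divide norm_powr_real_powr)
    done
  then show ?thesis using A B' by (simp add: integral_unique)
qed

lemma not_nonpos_Int_Re: "Re z > 0 \<Longrightarrow> z \<notin> \<int>\<^sub>\<le>\<^sub>0"
  by (auto elim!: nonpos_Ints_cases)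

lemma norm_Gamma_le2:
  fixes z :: complex assumes z: "Re z > 0"
  shows "norm (Gamma z) * (norm z * norm (z + 1)) \<le> Gamma (Re z + 2)"
proof -
  have "Gamma (z + 2) = (z + 1) * Gamma (z + 1)"
    using Gamma_plus1[of "z+1"] not_nonpos_Int_Re[of "z+1"] z by (simp add: add.assoc)
  also have "Gamma (z + 1) = z * Gamma z"
    using Gamma_plus1[of z] not_nonpos_Int_Re[of z] z by simp
  finally have "norm (Gamma (z+2)) = norm (Gamma z) * (norm z * norm (z + 1))"
    by (simp add: norm_mult)
  moreover have "norm (Gamma (z+2)) \<le> Gamma (Re z + 2)"
    using norm_Gamma_le[of "z+2"] z by simp
  ultimately show ?thesis by simp
qed

definition Gk :: "real \<Rightarrow> nat \<Rightarrow> real \<Rightarrow> complex" where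
  "Gk \<nu> k y = Gamma (complex_of_real \<nu> + (1 + \<i> * complex_of_real y)) * Gamma (1 + \<i> * complex_of_real y) ^ k"

lemma Gamma_line_cont:
  assumes "Re a > 0" shows "continuous_on UNIV (\<lambda>y::real. Gamma (a + \<i> * of_real y))"
proof -
  have "continuous_on {z. Re z > 0} Gamma"
    by (rule continuous_on_Gamma) (auto dest: not_nonpos_Int_Re)
  then show ?thesis
    by (rule continuous_on_compose2) (auto intro!: continuous_intros simp: assms)
qed

lemma Gk_cont: assumes "\<nu> \<ge> 0" shows "continuous_on UNIV (Gk \<nu> k)"
proof -
  have 1: "continuous_on UNIV (\<lambda>y::real. Gamma ((of_real \<nu> + 1) + \<i> * of_real y))"
    by (rule Gamma_line_cont) (use assms in simp)
  have 2: "continuous_on UNIV (\<lambda>y::real. Gamma (1 + \<i> * of_real y))"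
    by (rule Gamma_line_cont) simp
  show ?thesis unfolding Gk_def using continuous_on_mult[OF 1 continuous_on_power[OF 2, of k]]
    by (simp add: add_ac)
qed

lemma Gk_meas[measurable]: assumes "\<nu> \<ge> 0" shows "Gk \<nu> k \<in> borel_measurable borel"
  using Gk_cont[OF assms] by (rule borel_measurable_continuous_onI)

lemma norm_Gk: assumes "\<nu> \<ge> 0" shows "norm (Gk \<nu> k y) \<le> Gamma (\<nu> + 3) * inverse (1 + y^2)"
proof -
  define z where "z = complex_of_real \<nu> + (1 + \<i> * complex_of_real y)"
  have Rz: "Re z = \<nu> + 1" by (simp add: z_def)
  have g1: "norm (Gamma (1 + \<i> * complex_of_real y)) \<le> 1"
    using norm_Gamma_le[of "1 + \<i> * complex_of_real y"] by simp
  have gk: "norm (Gamma (1 + \<i> * complex_of_real y) ^ k) \<le> 1"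
    unfolding norm_power using g1 by (simp add: power_le_one)
  have nz: "norm z ^ 2 = (\<nu>+1)^2 + y^2" by (simp add: z_def cmod_def)
  have h1: "1 \<le> (\<nu>+1)*(\<nu>+1)" using mult_mono[of 1 "\<nu>+1" 1 "\<nu>+1"] assms by simp
  have "1 + y^2 \<le> norm z ^ 2" using nz h1 by (simp add: power2_eq_square)
  also have "norm z ^ 2 \<le> norm z * norm (z + 1)"
  proof -
    have "norm z \<le> norm (z + 1)" unfolding cmod_def using Rz assms
      by (intro real_sqrt_le_mono) (simp add: power2_eq_square mult_mono)
    then show ?thesis by (simp add: power2_eq_square mult_left_mono)
  qed
  finally have le: "1 + y^2 \<le> norm z * norm (z + 1)" .
  have "norm (Gamma z) * (norm z * norm (z + 1)) \<le> Gamma (\<nu> + 3)"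
    using norm_Gamma_le2[of z] Rz assms by (simp add: add.assoc)
  then have "norm (Gamma z) * (1 + y^2) \<le> Gamma (\<nu> + 3)"
    using le by (meson mult_left_mono norm_ge_zero order_trans)
  then have gz: "norm (Gamma z) \<le> Gamma (\<nu> + 3) * inverse (1 + y^2)"
    by (simp add: field_simps add_pos_nonneg)
  have "norm (Gk \<nu> k y) = norm (Gamma z) * norm (Gamma (1 + \<i> * complex_of_real y) ^ k)"
    by (simp add: Gk_def z_def norm_mult)
  also have "\<dots> \<le> norm (Gamma z) * 1" using gk by (intro mult_left_mono) auto
  finally show ?thesis using gz by simp
qed

lemma Gk_int_norm: assumes "\<nu> \<ge> 0" shows "integrable lborel (\<lambda>y. Gamma (\<nu> + 3 :: real) * inverse (1 + y^2))"
  using int_inv_sq by simp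

lemma Gk_integrable: assumes "\<nu> \<ge> 0" shows "integrable lborel (Gk \<nu> k)"
  by (rule Bochner_Integration.integrable_bound[OF Gk_int_norm[OF assms]])
     (use norm_Gk[OF assms] Gk_meas[OF assms] Gamma_real_pos[of "\<nu>+3"] assms in \<open>auto intro!: AE_I2 simp: add_pos_nonneg abs_mult\<close>)

lemma cpowr_pos: "x > 0 \<Longrightarrow> complex_of_real x powr w = exp (w * of_real (ln x))"
  by (simp add: powr_def Ln_of_real)

lemma norm_cpowr_line: "x > 0 \<Longrightarrow> norm (complex_of_real x powr (-(1 + \<i> * of_real y))) = inverse x"
  by (simp add: norm_powr_real_powr powr_minus)



lemma cont_param:
  fixes f :: "real \<Rightarrow> real \<Rightarrow> complex" and w :: "real \<Rightarrow> real"
  assumes w: "integrable lborel w"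
    and b: "\<And>v t. v \<in> S \<Longrightarrow> norm (f v t) \<le> w t"
    and c: "\<And>t. continuous_on S (\<lambda>v. f v t)"
    and m: "\<And>v. v \<in> S \<Longrightarrow> f v \<in> borel_measurable lborel"
  shows "continuous_on S (\<lambda>v. LINT t|lborel. f v t)"
proof (rule continuous_on_sequentiallyI)
  fix u a assume u: "\<forall>n. u n \<in> S" and a: "a \<in> S" and lim: "u \<longlonglongrightarrow> a"
  show "(\<lambda>n. LINT t|lborel. f (u n) t) \<longlonglongrightarrow> (LINT t|lborel. f a t)"
  proof (rule integral_dominated_convergence[where w=w])
    show "f a \<in> borel_measurable lborel" using m[OF a] by simp
    show "\<And>n. f (u n) \<in> borel_measurable lborel" using m u by simp
    show "integrable lborel w" by fact
    show "AE t in lborel. (\<lambda>n. f (u n) t) \<longlonglongrightarrow> f a t"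
    proof (rule AE_I2)
      fix t
      have "((\<lambda>v. f v t) \<circ> u) \<longlonglongrightarrow> f a t"
        using c[of t] u a lim unfolding continuous_on_sequentially by blast
      then show "(\<lambda>n. f (u n) t) \<longlonglongrightarrow> f a t" by (simp add: o_def)
    qed
    show "\<And>n. AE t in lborel. norm (f (u n) t) \<le> w t" using b u by auto
  qed
qed

definition gd0 :: "real \<Rightarrow> real \<Rightarrow> real" where
  "gd0 \<nu> x = x powr \<nu> / exp x / Gamma (\<nu> + 1)"
definition gd :: "real \<Rightarrow> real \<Rightarrow> real" where
  "gd \<nu> x = indicator {0<..} x * gd0 \<nu> x"
definition Nd :: "real \<Rightarrow> real measure" where
  "Nd \<nu> = density lborel (\<lambda>x. ennreal (gd \<nu> x))"
definition Md :: "real \<Rightarrow> real measure" where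
  "Md \<nu> = distr (Nd \<nu>) borel ln"
definition phi :: "real \<Rightarrow> real \<Rightarrow> complex" where
  "phi \<nu> t = Gk \<nu> 0 t / complex_of_real (Gamma (\<nu> + 1))"

lemma gd_meas[measurable]: "gd \<nu> \<in> borel_measurable borel"
  unfolding gd_def gd0_def by measurable

lemma gd0_nonneg: "gd0 \<nu> x \<ge> 0" if "\<nu> \<ge> 0" "x \<ge> 0"
  using that by (simp add: gd0_def)

lemma gd_nonneg: "\<nu> \<ge> 0 \<Longrightarrow> gd \<nu> x \<ge> 0"
  by (simp add: gd_def gd0_nonneg indicator_def)

lemma Gamma_nu1: assumes "\<nu> \<ge> 0" shows "Gamma (\<nu> + 1) \<noteq> (0::real)"
proof -
  have "Gamma (\<nu> + 1) > (0::real)" by (rule Gamma_real_pos) (use assms in simp)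
  then show ?thesis by simp
qed

lemma gd0_cont: "\<nu> \<ge> 0 \<Longrightarrow> continuous_on {0<..} (gd0 \<nu>)"
  unfolding gd0_def using Gamma_nu1[of \<nu>] by (intro continuous_intros) auto

lemma nn_gd: assumes "\<nu> \<ge> 0" shows "(\<integral>\<^sup>+ x. ennreal (gd \<nu> x) \<partial>lborel) = 1"
proof -
  have "((\<lambda>t. t powr (\<nu> + 1 - 1) / exp t) has_integral Gamma (\<nu> + 1)) {0..}"
    using Gamma_integral_real[of "\<nu>+1"] assms by simp
  then have "((\<lambda>t. t powr (\<nu> + 1 - 1) / exp t / Gamma (\<nu> + 1)) has_integral Gamma (\<nu> + 1) / Gamma (\<nu> + 1)) {0..}"
    by (rule has_integral_divide)
  then have "((\<lambda>t. gd0 \<nu> t) has_integral 1) {0..}"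
    using Gamma_nu1[OF assms] by (simp add: gd0_def)
  from nn_integral_has_integral_lebesgue'[OF _ this]
  have "(\<integral>\<^sup>+ x. ennreal (gd0 \<nu> x) * indicator {0..} x \<partial>lborel) = 1"
    using gd0_nonneg assms by simp
  also have "(\<integral>\<^sup>+ x. ennreal (gd0 \<nu> x) * indicator {0..} x \<partial>lborel) = (\<integral>\<^sup>+ x. ennreal (gd \<nu> x) \<partial>lborel)"
    by (intro nn_integral_cong) (auto simp: gd_def gd0_def indicator_def)
  finally show ?thesis .
qed

lemma prob_Nd: assumes "\<nu> \<ge> 0" shows "prob_space (Nd \<nu>)"
proof
  show "emeasure (Nd \<nu>) (space (Nd \<nu>)) = 1"
    using nn_gd[OF assms] by (simp add: Nd_def emeasure_density)
qed

lemma real_dist_Md: assumes "\<nu> \<ge> 0" shows "real_distribution (Md \<nu>)"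
proof -
  interpret prob_space "Nd \<nu>" by (rule prob_Nd[OF assms])
  show ?thesis unfolding Md_def by (rule real_distribution_distr) (simp add: Nd_def)
qed

lemma phi_meas[measurable]: "\<nu> \<ge> 0 \<Longrightarrow> phi \<nu> \<in> borel_measurable borel"
  unfolding phi_def by measurable

lemma phi_integrable: "\<nu> \<ge> 0 \<Longrightarrow> integrable lborel (phi \<nu>)"
  unfolding phi_def using Gk_integrable[of \<nu> 0] by simp

lemma Gamma_line_integral:
  fixes t :: real assumes "\<nu> \<ge> 0"
  defines "z \<equiv> complex_of_real \<nu> + (1 + \<i> * complex_of_real t)"
  shows "(LINT x|lborel. indicator {0<..} x *\<^sub>R (complex_of_real (x powr \<nu> / exp x) * iexp (t * ln x))) = Gamma z"
proof -
  have Rz: "Re z > 0" using assms by (simp add: z_def)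
  have eq: "(of_real x powr (z - 1) / of_real (exp x)) = complex_of_real (x powr \<nu> / exp x) * iexp (t * ln x)"
    if "x > 0" for x
    using that by (simp add: cpowr_pos z_def powr_def Ln_of_real exp_of_real[symmetric] exp_add[symmetric] algebra_simps)
  have ai: "(\<lambda>x. of_real x powr (z - 1) / of_real (exp x)) absolutely_integrable_on {0<..}"
    using absolutely_integrable_Gamma_integral'[OF Rz] .
  have ai2: "(\<lambda>x. complex_of_real (x powr \<nu> / exp x) * iexp (t * ln x)) absolutely_integrable_on {0<..}"
    using set_integrable_cong[of lebesgue lebesgue "{0<..}" "{0<..}" "\<lambda>x. of_real x powr (z - 1) / of_real (exp x)"
      "\<lambda>x. complex_of_real (x powr \<nu> / exp x) * iexp (t * ln x)"] ai eq by simp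
  have hi: "((\<lambda>x. complex_of_real (x powr \<nu> / exp x) * iexp (t * ln x)) has_integral Gamma z) {0<..}"
    using Gamma_integral_complex'[OF Rz] by (rule has_integral_spike[of "{}", rotated 2]) (auto simp: eq)
  have si: "set_integrable lborel {0<..} (\<lambda>x. complex_of_real (x powr \<nu> / exp x) * iexp (t * ln x))"
    using ai2 unfolding set_integrable_def
    by (subst (asm) integrable_completion) measurable
  have "(LINT x:{0<..}|lborel. complex_of_real (x powr \<nu> / exp x) * iexp (t * ln x)) = Gamma z"
    using set_borel_integral_eq_integral(2)[OF si] hi by (simp add: integral_unique)
  then show ?thesis by (simp add: set_lebesgue_integral_def)
qed

lemma char_Md: assumes "\<nu> \<ge> 0" shows "char (Md \<nu>) t = phi \<nu> t"
proof -
  have "char (Md \<nu>) t = (CLINT x|Nd \<nu>. iexp (t * ln x))"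
    unfolding char_def Md_def by (subst integral_distr) (auto simp: Nd_def)
  also have "\<dots> = (CLINT x|lborel. gd \<nu> x *\<^sub>R iexp (t * ln x))"
    unfolding Nd_def by (subst integral_density) (auto simp: gd_nonneg assms)
  also have "\<dots> = (CLINT x|lborel. indicator {0<..} x *\<^sub>R (complex_of_real (x powr \<nu> / exp x) * iexp (t * ln x)) / complex_of_real (Gamma (\<nu> + 1)))"
    by (intro Bochner_Integration.integral_cong) (auto simp: gd_def gd0_def indicator_def scaleR_conv_of_real)
  also have "\<dots> = phi \<nu> t"
    unfolding integral_divide_zero Gamma_line_integral[OF assms] by (simp add: phi_def Gk_def)
  finally show ?thesis .
qed



definition Fab :: "real \<Rightarrow> real \<Rightarrow> real \<Rightarrow> complex" where
  "Fab a b t = (iexp (-(t * a)) - iexp (-(t * b))) / (\<i> * complex_of_real t)"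
definition Hh :: "real \<Rightarrow> real \<Rightarrow> complex" where
  "Hh \<nu> v = (CLINT t|lborel. iexp (-(t * v)) * phi \<nu> t)"
definition Rr :: "real \<Rightarrow> real \<Rightarrow> real" where
  "Rr \<nu> v = Re (Hh \<nu> v) / (2 * pi)"

lemma Fab_meas[measurable]: "Fab a b \<in> borel_measurable borel"
  unfolding Fab_def by measurable

lemma Fab_bound: assumes "a \<le> b" shows "norm (Fab a b t) \<le> b - a"
proof (cases "t = 0")
  case True then show ?thesis using assms by (simp add: Fab_def)
next
  case False
  have "Fab a b t = (iexp ((-t) * b) - iexp ((-t) * a)) / (\<i> * complex_of_real (-t))"
    unfolding Fab_def by (simp add: divide_minus_right diff_divide_distrib)
  also have "norm \<dots> \<le> b - a"
    by (rule Levy_Inversion_aux2) (use assms False in auto)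
  finally show ?thesis .
qed

lemma Fab_int: assumes "a \<le> b" "t \<noteq> 0"
  shows "Fab a b t = (CLINT v|lborel. indicator {a..b} v *\<^sub>R iexp (-(t * v)))"
proof -
  define c where "c = \<i> * complex_of_real t"
  have c0: "c \<noteq> 0" using assms by (simp add: c_def)
  define G where "G = (\<lambda>z. exp (-(c * z)) / (-c))"
  have dG: "(G has_field_derivative exp (-(c * z))) (at z)" for z
  proof -
    have "(G has_field_derivative (exp (-(c * z)) * (-c)) / (-c)) (at z)"
      unfolding G_def using c0 by (intro derivative_eq_intros) auto
    then show ?thesis using c0 by simp
  qed
  have eqf: "exp (-(c * complex_of_real v)) = iexp (-(t * v))" for v
    by (simp add: c_def algebra_simps)
  have "((\<lambda>v. exp (-(c * complex_of_real v))) has_integral (G (of_real b) - G (of_real a))) {a..b}"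
    by (rule fundamental_theorem_of_calculus[OF assms(1)])
       (rule has_vector_derivative_real_field[OF dG])
  also have "G (of_real b) - G (of_real a) = Fab a b t"
    unfolding G_def Fab_def c_def using c0 assms
    by (simp add: field_simps)
  finally have hi: "((\<lambda>v. iexp (-(t * v))) has_integral Fab a b t) {a..b}"
    by (simp add: eqf)
  have si: "set_integrable lborel {a..b} (\<lambda>v. iexp (-(t * v)))"
    by (rule borel_integrable_atLeastAtMost') (intro continuous_intros)
  show ?thesis
    using set_borel_integral_eq_integral(2)[OF si] hi
    by (simp add: integral_unique set_lebesgue_integral_def)
qed

lemma Hh_cont: assumes "\<nu> \<ge> 0" shows "continuous_on UNIV (Hh \<nu>)"
  unfolding Hh_def[abs_def]
proof (rule cont_param[where w = "\<lambda>t. norm (phi \<nu> t)"])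
  show "integrable lborel (\<lambda>t. norm (phi \<nu> t))" using phi_integrable[OF assms] by simp
  show "norm (iexp (-(t * v)) * phi \<nu> t) \<le> norm (phi \<nu> t)" for v t
    by (simp add: norm_mult)
  show "continuous_on UNIV (\<lambda>v. iexp (-(t * v)) * phi \<nu> t)" for t
    by (intro continuous_intros)
  show "(\<lambda>t. iexp (-(t * v)) * phi \<nu> t) \<in> borel_measurable lborel" for v
    using phi_meas[OF assms] by measurable
qed

lemma Rr_cont: assumes "\<nu> \<ge> 0" shows "continuous_on UNIV (Rr \<nu>)"
  unfolding Rr_def[abs_def] using Hh_cont[OF assms] by (intro continuous_intros) auto

lemma ln_sets[measurable]: "ln -` A \<in> sets borel" if "A \<in> sets (borel :: real measure)"
proof -
  have "(\<lambda>x::real. ln x) \<in> borel_measurable borel" by (rule borel_measurable_ln[OF measurable_ident_sets[OF refl]])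
  from measurable_sets[OF this that] show ?thesis by simp
qed

lemma space_Nd[simp]: "space (Nd \<nu>) = UNIV" by (simp add: Nd_def)
lemma sets_Nd[simp]: "sets (Nd \<nu>) = sets borel" by (simp add: Nd_def)

lemma measure_point: assumes "\<nu> \<ge> 0" shows "measure (Md \<nu>) {c} = 0"
proof -
  have "emeasure (Md \<nu>) {c} = emeasure (Nd \<nu>) (ln -` {c})"
    unfolding Md_def by (subst emeasure_distr) (auto simp: Nd_def)
  also have "\<dots> = (\<integral>\<^sup>+ x. ennreal (gd \<nu> x) * indicator (ln -` {c}) x \<partial>lborel)"
    unfolding Nd_def by (rule emeasure_density) auto
  also have "\<dots> = (\<integral>\<^sup>+ x. (0::ennreal) \<partial>(lborel::real measure))"
  proof (rule nn_integral_cong_AE)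
    show "AE x in lborel. ennreal (gd \<nu> x) * indicator (ln -` {c}) x = 0"
      using AE_lborel_singleton[of "exp c"]
    proof eventually_elim
      case (elim x)
      then show ?case by (auto simp: gd_def indicator_def)
    qed
  qed
  finally show ?thesis by (simp add: measure_def)
qed

lemma measure_ab: assumes "\<nu> \<ge> 0" "a \<le> b"
  shows "measure (Md \<nu>) {a<..b} = integral {exp a..exp b} (gd0 \<nu>)"
proof -
  have cont: "continuous_on {exp a..exp b} (gd0 \<nu>)"
    using gd0_cont[OF assms(1)] by (rule continuous_on_subset) (auto intro: less_le_trans[OF exp_gt_zero])
  have hi: "(gd0 \<nu> has_integral integral {exp a..exp b} (gd0 \<nu>)) {exp a..exp b}"
    using integrable_continuous_interval[OF cont] by (simp add: integrable_integral)
  have "emeasure (Md \<nu>) {a<..b} = emeasure (Nd \<nu>) (ln -` {a<..b})"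
    unfolding Md_def by (subst emeasure_distr) (auto simp: Nd_def)
  also have "\<dots> = (\<integral>\<^sup>+ x. ennreal (gd \<nu> x) * indicator (ln -` {a<..b}) x \<partial>lborel)"
    unfolding Nd_def by (rule emeasure_density) auto
  also have "\<dots> = (\<integral>\<^sup>+ x. ennreal (gd0 \<nu> x) * indicator {exp a..exp b} x \<partial>lborel)"
  proof (rule nn_integral_cong_AE)
    show "AE x in lborel. ennreal (gd \<nu> x) * indicator (ln -` {a<..b}) x = ennreal (gd0 \<nu> x) * indicator {exp a..exp b} x"
      using AE_lborel_singleton[of "exp a"]
    proof eventually_elim
      case (elim x)
      show ?case
      proof (cases "x > 0")
        case True
        have 1: "a < ln x \<longleftrightarrow> exp a < x" using True by (metis exp_less_cancel_iff exp_ln)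
        have 2: "ln x \<le> b \<longleftrightarrow> x \<le> exp b" using True by (metis exp_le_cancel_iff exp_ln)
        show ?thesis using True elim 1 2 by (auto simp: gd_def indicator_def)
      next
        case False
        have "\<not> exp a \<le> x" using False by (meson exp_gt_zero less_le_trans not_less)
        then show ?thesis using False by (auto simp: gd_def indicator_def)
      qed
    qed
  qed
  also have "\<dots> = ennreal (integral {exp a..exp b} (gd0 \<nu>))"
  proof (rule nn_integral_has_integral_lebesgue'[OF _ hi])
    fix x assume "x \<in> {exp a..exp b}"
    then have "x \<ge> 0" by (metis atLeastAtMost_iff exp_gt_zero less_le_trans less_imp_le)
    then show "0 \<le> gd0 \<nu> x" using gd0_nonneg assms by auto
  qed
  finally have em: "emeasure (Md \<nu>) {a<..b} = ennreal (integral {exp a..exp b} (gd0 \<nu>))" .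
  have "integral {exp a..exp b} (gd0 \<nu>) \<ge> 0"
  proof (rule integral_nonneg[OF integrable_continuous_interval[OF cont]])
    fix x assume "x \<in> {exp a..exp b}"
    then have "x \<ge> 0" by (metis atLeastAtMost_iff exp_gt_zero less_le_trans less_imp_le)
    then show "0 \<le> gd0 \<nu> x" using gd0_nonneg assms by auto
  qed
  then show ?thesis using em by (simp add: measure_def)
qed



lemma levy_lim: assumes "\<nu> \<ge> 0" "a \<le> b"
  shows "complex_of_real (measure (Md \<nu>) {a<..b}) = complex_of_real (1 / (2 * pi)) * (CLINT t|lborel. Fab a b t * phi \<nu> t)"
proof -
  interpret real_distribution "Md \<nu>" by (rule real_dist_Md[OF assms(1)])
  note [measurable] = phi_meas[OF assms(1)]
  have L: "(\<lambda>T::nat. complex_of_real (1 / (2 * pi)) *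
       (CLBINT t=ereal (real_of_int (- int T))..ereal (real T). Fab a b t * phi \<nu> t))
      \<longlonglongrightarrow> complex_of_real (measure (Md \<nu>) {a<..b})"
    using Levy_Inversion[OF assms(2) measure_point[OF assms(1)] measure_point[OF assms(1)]]
    by (simp add: Fab_def char_Md[OF assms(1)] fun_eq_iff)
  have eq: "(CLBINT t=ereal (real_of_int (- int T))..ereal (real T). Fab a b t * phi \<nu> t) =
      (CLINT t|lborel. indicator {- real T<..<real T} t *\<^sub>R (Fab a b t * phi \<nu> t))" for T :: nat
    by (simp add: interval_lebesgue_integral_def set_lebesgue_integral_def)
  have L2: "(\<lambda>T::nat. CLBINT t=ereal (real_of_int (- int T))..ereal (real T). Fab a b t * phi \<nu> t)
      \<longlonglongrightarrow> (CLINT t|lborel. Fab a b t * phi \<nu> t)"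
    unfolding eq
  proof (rule integral_dominated_convergence[where w = "\<lambda>t. (b - a) * norm (phi \<nu> t)"])
    show "(\<lambda>t. Fab a b t * phi \<nu> t) \<in> borel_measurable lborel" by measurable
    show "\<And>i. (\<lambda>t. indicator {- real i<..<real i} t *\<^sub>R (Fab a b t * phi \<nu> t)) \<in> borel_measurable lborel"
      by measurable
    show "integrable lborel (\<lambda>t. (b - a) * norm (phi \<nu> t))"
      using phi_integrable[OF assms(1)] by simp
    show "AE t in lborel. (\<lambda>i. indicator {- real i<..<real i} t *\<^sub>R (Fab a b t * phi \<nu> t)) \<longlonglongrightarrow> Fab a b t * phi \<nu> t"
    proof (rule AE_I2)
      fix t :: real
      obtain N :: nat where N: "\<bar>t\<bar> < real N" using reals_Archimedean2 by blast
      have "eventually (\<lambda>i. indicator {- real i<..<real i} t *\<^sub>R (Fab a b t * phi \<nu> t) = Fab a b t * phi \<nu> t) sequentially"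
        unfolding eventually_sequentially
      proof (intro exI allI impI)
        fix i assume "N \<le> i"
        then have "real N \<le> real i" by simp
        then have "t \<in> {- real i<..<real i}" using N by auto
        then show "indicator {- real i<..<real i} t *\<^sub>R (Fab a b t * phi \<nu> t) = Fab a b t * phi \<nu> t" by simp
      qed
      then show "(\<lambda>i. indicator {- real i<..<real i} t *\<^sub>R (Fab a b t * phi \<nu> t)) \<longlonglongrightarrow> Fab a b t * phi \<nu> t"
        by (rule tendsto_eventually)
    qed
    show "\<And>i. AE t in lborel. norm (indicator {- real i<..<real i} t *\<^sub>R (Fab a b t * phi \<nu> t)) \<le> (b - a) * norm (phi \<nu> t)"
    proof (intro AE_I2)
      fix i t
      have "norm (Fab a b t * phi \<nu> t) \<le> (b - a) * norm (phi \<nu> t)"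
        unfolding norm_mult by (intro mult_right_mono Fab_bound assms) auto
      then show "norm (indicator {- real i<..<real i} t *\<^sub>R (Fab a b t * phi \<nu> t)) \<le> (b - a) * norm (phi \<nu> t)"
        using assms by (auto simp: indicator_def)
    qed
  qed
  have L3: "(\<lambda>T::nat. complex_of_real (1 / (2 * pi)) *
       (CLBINT t=ereal (real_of_int (- int T))..ereal (real T). Fab a b t * phi \<nu> t))
      \<longlonglongrightarrow> complex_of_real (1 / (2 * pi)) * (CLINT t|lborel. Fab a b t * phi \<nu> t)"
    by (intro tendsto_mult_left L2)
  show ?thesis using LIMSEQ_unique[OF L L3] .
qed



lemma fubini_Fab: assumes "\<nu> \<ge> 0" "a \<le> b"
  shows "(CLINT t|lborel. Fab a b t * phi \<nu> t) = (CLINT v|lborel. indicator {a..b} v *\<^sub>R Hh \<nu> v)"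
proof -
  note [measurable] = phi_meas[OF assms(1)]
  define K where "K = (\<lambda>v t. indicator {a..b} v *\<^sub>R (iexp (-(t * v)) * phi \<nu> t))"
  have Km[measurable]: "case_prod K \<in> borel_measurable (lborel \<Otimes>\<^sub>M lborel)"
    unfolding K_def by measurable
  have nK: "norm (K v t) = indicator {a..b} v * norm (phi \<nu> t)" for v t
    by (simp add: K_def norm_mult indicator_def)
  have iphi: "integrable lborel (\<lambda>t. norm (phi \<nu> t))" using phi_integrable[OF assms(1)] by simp
  have Kint: "integrable (lborel \<Otimes>\<^sub>M lborel) (case_prod K)"
  proof (rule lborel_pair.Fubini_integrable)
    show "case_prod K \<in> borel_measurable (lborel \<Otimes>\<^sub>M lborel)" by (rule Km)
    have "(\<lambda>v. \<integral>t. norm (case_prod K (v, t)) \<partial>lborel) = (\<lambda>v. indicator {a..b} v * (\<integral>t. norm (phi \<nu> t) \<partial>lborel))"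
      by (simp add: nK)
    moreover have "integrable lborel (\<lambda>v. indicator {a..b} v * (\<integral>t. norm (phi \<nu> t) \<partial>lborel) :: real)"
      by (intro integrable_mult_left integrable_real_indicator) (use assms in \<open>auto simp: emeasure_lborel_Icc\<close>)
    ultimately show "integrable lborel (\<lambda>v. \<integral>t. norm (case_prod K (v, t)) \<partial>lborel)" by simp
    show "AE v in lborel. integrable lborel (\<lambda>t. case_prod K (v, t))"
    proof (rule AE_I2)
      fix v
      show "integrable lborel (\<lambda>t. case_prod K (v, t))"
        by (rule Bochner_Integration.integrable_bound[OF iphi]) (auto simp: nK indicator_def intro!: AE_I2)
    qed
  qed
  have F: "(\<integral>t. (\<integral>v. K v t \<partial>lborel) \<partial>lborel) = (\<integral>v. (\<integral>t. K v t \<partial>lborel) \<partial>lborel)"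
    using lborel_pair.Fubini_integral[OF Kint] .
  have l: "(\<integral>t. (\<integral>v. K v t \<partial>lborel) \<partial>lborel) = (CLINT t|lborel. Fab a b t * phi \<nu> t)"
  proof (rule integral_discrete_difference[where X="{0}"])
    fix t :: real assume "t \<notin> {0}"
    then have "t \<noteq> 0" by simp
    have "(\<integral>v. K v t \<partial>lborel) = (CLINT v|lborel. indicator {a..b} v *\<^sub>R iexp (-(t * v))) * phi \<nu> t"
      unfolding K_def by (simp add: scaleR_conv_of_real mult.assoc flip: integral_mult_left_zero)
    also have "\<dots> = Fab a b t * phi \<nu> t" using Fab_int[OF assms(2) \<open>t \<noteq> 0\<close>] by simp
    finally show "(\<integral>v. K v t \<partial>lborel) = Fab a b t * phi \<nu> t" .
  qed auto
  have r: "(\<integral>v. (\<integral>t. K v t \<partial>lborel) \<partial>lborel) = (CLINT v|lborel. indicator {a..b} v *\<^sub>R Hh \<nu> v)"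
    unfolding K_def Hh_def by simp
  show ?thesis using F l r by simp
qed

lemma measure_Rr: assumes "\<nu> \<ge> 0" "a \<le> b"
  shows "measure (Md \<nu>) {a<..b} = integral {a..b} (Rr \<nu>)"
proof -
  have si: "set_integrable lborel {a..b} (Hh \<nu>)"
    by (rule borel_integrable_atLeastAtMost') (rule continuous_on_subset[OF Hh_cont[OF assms(1)]], simp)
  have si2: "set_integrable lborel {a..b} (Rr \<nu>)"
    by (rule borel_integrable_atLeastAtMost') (rule continuous_on_subset[OF Rr_cont[OF assms(1)]], simp)
  have "complex_of_real (measure (Md \<nu>) {a<..b}) = complex_of_real (1 / (2 * pi)) * (CLINT v|lborel. indicator {a..b} v *\<^sub>R Hh \<nu> v)"
    using levy_lim[OF assms] fubini_Fab[OF assms] by simp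
  then have "measure (Md \<nu>) {a<..b} = Re (complex_of_real (1 / (2 * pi)) * (CLINT v|lborel. indicator {a..b} v *\<^sub>R Hh \<nu> v))"
    by (metis Re_complex_of_real)
  also have "\<dots> = 1 / (2 * pi) * Re (CLINT v|lborel. indicator {a..b} v *\<^sub>R Hh \<nu> v)"
    by simp
  also have "Re (CLINT v|lborel. indicator {a..b} v *\<^sub>R Hh \<nu> v) = (LINT v|lborel. Re (indicator {a..b} v *\<^sub>R Hh \<nu> v))"
    using si unfolding set_integrable_def by (rule integral_Re[symmetric])
  also have "1 / (2 * pi) * (LINT v|lborel. Re (indicator {a..b} v *\<^sub>R Hh \<nu> v)) = (LINT v|lborel. indicator {a..b} v *\<^sub>R Rr \<nu> v)"
    by (simp add: Rr_def)
  also have "\<dots> = integral {a..b} (Rr \<nu>)"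
    using set_borel_integral_eq_integral(2)[OF si2] by (simp add: set_lebesgue_integral_def)
  finally show ?thesis .
qed



lemma Rr_eq: assumes "\<nu> \<ge> 0" shows "Rr \<nu> b0 = gd0 \<nu> (exp b0) * exp b0"
proof -
  define a where "a = b0 - 1"
  define c where "c = b0 + 1"
  define F1 where "F1 = (\<lambda>b. integral {a..b} (Rr \<nu>))"
  define G where "G = (\<lambda>u. integral {exp a..u} (gd0 \<nu>))"
  have ab: "a < b0" "b0 < c" by (auto simp: a_def c_def)
  have d1w: "(F1 has_real_derivative Rr \<nu> b0) (at b0 within {a..c})"
    unfolding F1_def
    by (rule integral_has_real_derivative) (use ab in \<open>auto intro: continuous_on_subset[OF Rr_cont[OF assms]]\<close>)
  have d1: "(F1 has_real_derivative Rr \<nu> b0) (at b0)"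
    using d1w by (simp add: at_within_Icc_at[OF ab])
  have ea: "exp a < exp b0" "exp b0 < exp c" using ab by auto
  have contg: "continuous_on {exp a..exp c} (gd0 \<nu>)"
    by (rule continuous_on_subset[OF gd0_cont[OF assms]]) (auto intro: less_le_trans[OF exp_gt_zero])
  have d2w: "(G has_real_derivative gd0 \<nu> (exp b0)) (at (exp b0) within {exp a..exp c})"
    unfolding G_def
    by (rule integral_has_real_derivative[OF contg]) (use ea in auto)
  have d2: "(G has_real_derivative gd0 \<nu> (exp b0)) (at (exp b0))"
    using d2w by (simp add: at_within_Icc_at[OF ea])
  have d3: "((\<lambda>b. G (exp b)) has_real_derivative gd0 \<nu> (exp b0) * exp b0) (at b0)"
    using DERIV_chain'[OF DERIV_exp d2] by simp
  have d4: "(F1 has_real_derivative gd0 \<nu> (exp b0) * exp b0) (at b0)"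
  proof (rule has_field_derivative_transform_within_open[OF d3, of "{a<..}"])
    show "open {a<..}" by simp
    show "b0 \<in> {a<..}" using ab by simp
    fix b assume "b \<in> {a<..}"
    then have "a \<le> b" by simp
    show "G (exp b) = F1 b"
      unfolding G_def F1_def
      using measure_Rr[OF assms \<open>a \<le> b\<close>] measure_ab[OF assms \<open>a \<le> b\<close>] by simp
  qed
  show ?thesis using DERIV_unique[OF d1 d4] .
qed

lemma rho_Gk: "rho_uexp \<nu> k x = Re (integral UNIV (\<lambda>y. Gk \<nu> k y * complex_of_real x powr (- (1 + \<i> * complex_of_real y)))) / (2 * pi)"
  by (simp add: rho_uexp_def Gk_def)

lemma rho0: assumes "\<nu> \<ge> 0" "x > 0" shows "rho_uexp \<nu> 0 x = x powr \<nu> / exp x"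
proof -
  define Z where "Z = Gamma (\<nu> + 1)"
  have Z0: "Z \<noteq> 0" using Gamma_nu1[OF assms(1)] by (simp add: Z_def)
  have pw: "Gk \<nu> 0 y * complex_of_real x powr (- (1 + \<i> * complex_of_real y)) =
            complex_of_real (Z / x) * (iexp (-(y * ln x)) * phi \<nu> y)" for y
  proof -
    have "complex_of_real x powr (- (1 + \<i> * complex_of_real y)) = exp (- complex_of_real (ln x)) * iexp (-(y * ln x))"
      using assms(2) by (simp add: cpowr_pos exp_add[symmetric] algebra_simps)
    also have "exp (- complex_of_real (ln x)) = complex_of_real (1 / x)"
      using assms(2) by (simp add: exp_minus exp_of_real inverse_eq_divide)
    finally show ?thesis using Z0 by (simp add: phi_def Z_def field_simps)
  qed
  note [measurable] = phi_meas[OF assms(1)]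
  have int1: "integrable lborel (\<lambda>y. iexp (-(y * ln x)) * phi \<nu> y)"
    by (rule Bochner_Integration.integrable_bound[OF phi_integrable[OF assms(1)]])
       (auto simp: norm_mult intro!: AE_I2)
  have "integral UNIV (\<lambda>y. Gk \<nu> 0 y * complex_of_real x powr (- (1 + \<i> * complex_of_real y)))
      = integral UNIV (\<lambda>y. complex_of_real (Z / x) * (iexp (-(y * ln x)) * phi \<nu> y))"
    by (simp only: pw)
  also have "\<dots> = (CLINT y|lborel. complex_of_real (Z / x) * (iexp (-(y * ln x)) * phi \<nu> y))"
    by (rule integral_lborel) (use int1 in simp)
  also have "\<dots> = complex_of_real (Z / x) * Hh \<nu> (ln x)"
    by (simp add: Hh_def)
  finally have "rho_uexp \<nu> 0 x = Re (complex_of_real (Z / x) * Hh \<nu> (ln x)) / (2 * pi)"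
    by (simp add: rho_Gk)
  also have "\<dots> = Z / x * Rr \<nu> (ln x)" by (simp add: Rr_def)
  also have "\<dots> = Z / x * (gd0 \<nu> x * x)" using Rr_eq[OF assms(1), of "ln x"] assms(2) by simp
  also have "\<dots> = x powr \<nu> / exp x" using Z0 assms(2) by (simp add: gd0_def Z_def)
  finally show ?thesis .
qed



definition Exy :: "real \<Rightarrow> real \<Rightarrow> complex" where
  "Exy x y = exp (- (1 + \<i> * complex_of_real y) * complex_of_real (ln x))"

lemma Exy_meas[measurable]: "Exy x \<in> borel_measurable borel"
  unfolding Exy_def by measurable

lemma Exy_powr: "x > 0 \<Longrightarrow> complex_of_real x powr (- (1 + \<i> * complex_of_real y)) = Exy x y"
  by (simp add: cpowr_pos Exy_def)

lemma norm_Ex: assumes "x > 0" shows "norm (Exy x y) = 1 / x"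
proof -
  have "Exy x y = complex_of_real x powr (- (1 + \<i> * complex_of_real y))" by (rule Exy_powr[OF assms, symmetric])
  then show ?thesis using norm_cpowr_line[OF assms, of y] by (simp only: inverse_eq_divide)
qed

lemma Ik_integrable: assumes "\<nu> \<ge> 0" "x > 0"
  shows "integrable lborel (\<lambda>y. Gk \<nu> k y * Exy x y)"
proof -
  note [measurable] = Gk_meas[OF assms(1)]
  have "integrable lborel (\<lambda>y. norm (Gk \<nu> k y) * (1 / x))"
    using Gk_integrable[OF assms(1), of k] by simp
  then show ?thesis
    by (rule Bochner_Integration.integrable_bound) (auto simp: norm_mult norm_Ex assms abs_of_pos[OF assms(2)] intro!: AE_I2)
qed

lemma rho_LINT: assumes "\<nu> \<ge> 0" "x > 0"
  shows "rho_uexp \<nu> k x = Re (CLINT y|lborel. Gk \<nu> k y * Exy x y) / (2 * pi)"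
proof -
  have "integral UNIV (\<lambda>y. Gk \<nu> k y * complex_of_real x powr (- (1 + \<i> * complex_of_real y)))
       = integral UNIV (\<lambda>y. Gk \<nu> k y * Exy x y)"
    using assms(2) by (simp only: Exy_powr)
  also have "\<dots> = (CLINT y|lborel. Gk \<nu> k y * Exy x y)"
    by (rule integral_lborel[OF Ik_integrable[OF assms]])
  finally show ?thesis by (simp add: rho_Gk)
qed

lemma exp_set_integrable: "set_integrable lborel {0<..} (\<lambda>t::real. exp (- t))"
proof -
  have "(\<integral>\<^sup>+x. ennreal (x^0 * exp (-x)) * indicator {0 ..} x \<partial>lborel) = real_of_nat (fact 0)"
    by (rule nn_intergal_power_times_exp_Ici)
  then have "(\<integral>\<^sup>+x. ennreal (exp (-x) * indicator {0 ..} x) \<partial>lborel) = ennreal 1"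
    by (simp add: ennreal_mult' ennreal_indicator)
  then have "integrable lborel (\<lambda>x::real. exp (-x) * indicator {0 ..} x)"
    by (intro integrableI_nn_integral_finite) auto
  then show ?thesis unfolding set_integrable_def
    by (rule Bochner_Integration.integrable_bound) (auto simp: indicator_def intro!: AE_I2)
qed

lemma Gamma_line_integral0:
  "(CLINT t|lborel. indicator {0<..} t *\<^sub>R (iexp (y * ln t) * complex_of_real (exp (- t)))) = Gamma (1 + \<i> * complex_of_real y)"
proof -
  have "(CLINT t|lborel. indicator {0<..} t *\<^sub>R (iexp (y * ln t) * complex_of_real (exp (- t))))
     = (CLINT t|lborel. indicator {0<..} t *\<^sub>R (complex_of_real (t powr 0 / exp t) * iexp (y * ln t)))"
    by (intro Bochner_Integration.integral_cong) (auto simp: indicator_def exp_minus field_simps)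
  also have "\<dots> = Gamma (complex_of_real 0 + (1 + \<i> * complex_of_real y))"
    by (rule Gamma_line_integral) simp
  finally show ?thesis by simp
qed

lemma conv: assumes "\<nu> \<ge> 0" "x > 0"
  shows "integrable lborel (\<lambda>t. indicator {0<..} t * (rho_uexp \<nu> j (x / t) * exp (- t) / t))"
    and "rho_uexp \<nu> (Suc j) x = (LINT t|lborel. indicator {0<..} t * (rho_uexp \<nu> j (x / t) * exp (- t) / t))"
proof -
  note [measurable] = Gk_meas[OF assms(1)]
  define F where "F = (\<lambda>y t. indicator {0<..} t *\<^sub>R (Gk \<nu> j y * Exy x y * (iexp (y * ln t) * complex_of_real (exp (- t)))))"
  have Fm[measurable]: "case_prod F \<in> borel_measurable (lborel \<Otimes>\<^sub>M lborel)"
    unfolding F_def by measurable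
  have nF: "norm (F y t) = norm (Gk \<nu> j y) * (1 / x) * (indicator {0<..} t * exp (- t))" for y t
    by (simp add: F_def norm_mult norm_Ex assms indicator_def)
  have iexp': "integrable lborel (\<lambda>t::real. indicator {0<..} t * exp (- t))"
    using exp_set_integrable by (simp add: set_integrable_def)
  have Fint: "integrable (lborel \<Otimes>\<^sub>M lborel) (case_prod F)"
  proof (rule lborel_pair.Fubini_integrable)
    show "case_prod F \<in> borel_measurable (lborel \<Otimes>\<^sub>M lborel)" by (rule Fm)
    have "(\<lambda>y. \<integral>t. norm (case_prod F (y, t)) \<partial>lborel) = (\<lambda>y. norm (Gk \<nu> j y) * (1 / x) * (\<integral>t. indicator {0<..} t * exp (- t) \<partial>lborel))"
      by (simp add: nF)
    moreover have "integrable lborel (\<lambda>y. norm (Gk \<nu> j y) * (1 / x) * (\<integral>t. indicator {0<..} t * exp (- t) \<partial>lborel))"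
      using Gk_integrable[OF assms(1), of j] by simp
    ultimately show "integrable lborel (\<lambda>y. \<integral>t. norm (case_prod F (y, t)) \<partial>lborel)" by simp
    show "AE y in lborel. integrable lborel (\<lambda>t. case_prod F (y, t))"
    proof (rule AE_I2)
      fix y
      have "integrable lborel (\<lambda>t. norm (Gk \<nu> j y) * (1 / x) * (indicator {0<..} t * exp (- t)))"
        using iexp' by simp
      then show "integrable lborel (\<lambda>t. case_prod F (y, t))"
        by (rule Bochner_Integration.integrable_bound) (auto simp: nF abs_of_pos assms intro!: AE_I2)
    qed
  qed
  have FU: "(\<integral>t. (\<integral>y. F y t \<partial>lborel) \<partial>lborel) = (\<integral>y. (\<integral>t. F y t \<partial>lborel) \<partial>lborel)"
    using lborel_pair.Fubini_integral[OF Fint] .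
  have int_snd: "integrable lborel (\<lambda>t. \<integral>y. F y t \<partial>lborel)"
    using lborel_pair.integrable_snd[OF Fint] .
  have inner_t: "(\<integral>t. F y t \<partial>lborel) = Gk \<nu> (Suc j) y * Exy x y" for y
  proof -
    have "(\<integral>t. F y t \<partial>lborel) = Gk \<nu> j y * Exy x y * (CLINT t|lborel. indicator {0<..} t *\<^sub>R (iexp (y * ln t) * complex_of_real (exp (- t))))"
    proof -
      have "(\<lambda>t. F y t) = (\<lambda>t. (Gk \<nu> j y * Exy x y) * (indicator {0<..} t *\<^sub>R (iexp (y * ln t) * complex_of_real (exp (- t)))))"
        unfolding F_def by (simp only: mult_scaleR_right)
      then show ?thesis by (simp only: integral_mult_right_zero)
    qed
    also have "\<dots> = Gk \<nu> j y * Exy x y * Gamma (1 + \<i> * complex_of_real y)"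
      by (simp only: Gamma_line_integral0)
    also have "\<dots> = Gk \<nu> (Suc j) y * Exy x y"
      by (simp add: Gk_def)
    finally show ?thesis .
  qed
  have inner_y: "Re (\<integral>y. F y t \<partial>lborel) / (2 * pi) = indicator {0<..} t * (rho_uexp \<nu> j (x / t) * exp (- t) / t)" for t
  proof (cases "t > 0")
    case True
    have xt: "x / t > 0" using True assms by simp
    have eqE: "Exy x y * iexp (y * ln t) = Exy (x / t) y * complex_of_real (1 / t)" for y
    proof -
      have "Exy (x / t) y = exp (- (1 + \<i> * complex_of_real y) * complex_of_real (ln x) + (1 + \<i> * complex_of_real y) * complex_of_real (ln t))"
        using True assms by (simp add: Exy_def ln_div algebra_simps)
      also have "\<dots> = Exy x y * (exp (complex_of_real (ln t)) * iexp (y * ln t))"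
        by (simp add: Exy_def exp_add[symmetric] algebra_simps)
      also have "exp (complex_of_real (ln t)) = complex_of_real t"
        using True by (simp add: exp_of_real)
      finally show ?thesis using True by (simp add: field_simps)
    qed
    have "(\<integral>y. F y t \<partial>lborel) = (CLINT y|lborel. (Gk \<nu> j y * Exy (x / t) y) * complex_of_real (exp (- t) / t))"
    proof (intro Bochner_Integration.integral_cong refl)
      fix y
      have "F y t = Gk \<nu> j y * (Exy x y * iexp (y * ln t)) * complex_of_real (exp (- t))"
        using True by (simp add: F_def mult.assoc)
      also have "\<dots> = (Gk \<nu> j y * Exy (x / t) y) * complex_of_real (exp (- t) / t)"
        unfolding eqE by (simp add: mult.assoc)
      finally show "F y t = (Gk \<nu> j y * Exy (x / t) y) * complex_of_real (exp (- t) / t)" .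
    qed
    also have "\<dots> = (CLINT y|lborel. Gk \<nu> j y * Exy (x / t) y) * complex_of_real (exp (- t) / t)"
      by simp
    finally have "Re (\<integral>y. F y t \<partial>lborel) / (2 * pi) = (Re (CLINT y|lborel. Gk \<nu> j y * Exy (x / t) y) / (2 * pi)) * (exp (- t) / t)"
      by simp
    also have "\<dots> = rho_uexp \<nu> j (x / t) * (exp (- t) / t)"
      using rho_LINT[OF assms(1) xt] by simp
    finally show ?thesis using True by simp
  next
    case False
    then show ?thesis by (simp add: F_def)
  qed
  have G_eq: "(\<lambda>t. indicator {0<..} t * (rho_uexp \<nu> j (x / t) * exp (- t) / t)) = (\<lambda>t. Re (\<integral>y. F y t \<partial>lborel) / (2 * pi))"
    using inner_y by simp
  show "integrable lborel (\<lambda>t. indicator {0<..} t * (rho_uexp \<nu> j (x / t) * exp (- t) / t))"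
    unfolding G_eq using int_snd by simp
  have "rho_uexp \<nu> (Suc j) x = Re (CLINT y|lborel. Gk \<nu> (Suc j) y * Exy x y) / (2 * pi)"
    by (rule rho_LINT[OF assms])
  also have "(CLINT y|lborel. Gk \<nu> (Suc j) y * Exy x y) = (\<integral>t. (\<integral>y. F y t \<partial>lborel) \<partial>lborel)"
    using FU inner_t by simp
  also have "Re \<dots> / (2 * pi) = (LINT t|lborel. Re (\<integral>y. F y t \<partial>lborel) / (2 * pi))"
    using int_snd by simp
  also have "\<dots> = (LINT t|lborel. indicator {0<..} t * (rho_uexp \<nu> j (x / t) * exp (- t) / t))"
    unfolding G_eq ..
  finally show "rho_uexp \<nu> (Suc j) x = (LINT t|lborel. indicator {0<..} t * (rho_uexp \<nu> j (x / t) * exp (- t) / t))" .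
qed



lemma rho_cont: assumes "\<nu> \<ge> 0" shows "continuous_on {0<..} (rho_uexp \<nu> k)"
proof (rule continuous_at_imp_continuous_on, intro ballI)
  fix x0 :: real assume "x0 \<in> {0<..}"
  then have x0: "x0 > 0" by simp
  define c where "c = x0 / 2"
  have c: "c > 0" "c < x0" using x0 by (auto simp: c_def)
  note [measurable] = Gk_meas[OF assms]
  have cont1: "continuous_on {c<..} (\<lambda>x. CLINT y|lborel. Gk \<nu> k y * Exy x y)"
  proof (rule cont_param[where w = "\<lambda>y. norm (Gk \<nu> k y) * (1 / c)"])
    show "integrable lborel (\<lambda>y. norm (Gk \<nu> k y) * (1 / c))" using Gk_integrable[OF assms, of k] by simp
    fix v y assume "v \<in> {c<..}"
    then have v: "v > c" by simp
    have "norm (Gk \<nu> k y) / v \<le> norm (Gk \<nu> k y) / c" by (rule frac_le) (use c(1) v in auto)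
    then show "norm (Gk \<nu> k y * Exy v y) \<le> norm (Gk \<nu> k y) * (1 / c)"
      using v c by (simp add: norm_mult norm_Ex)
  next
    show "continuous_on {c<..} (\<lambda>v. Gk \<nu> k y * Exy v y)" for y
      unfolding Exy_def by (intro continuous_intros) (use c(1) in auto)
    show "(\<lambda>y. Gk \<nu> k y * Exy v y) \<in> borel_measurable lborel" for v by measurable
  qed
  have cont2: "continuous_on {c<..} (rho_uexp \<nu> k)"
  proof -
    have "continuous_on {c<..} (\<lambda>x. Re (CLINT y|lborel. Gk \<nu> k y * Exy x y) / (2 * pi))"
      using cont1 by (intro continuous_intros) auto
    then show ?thesis
      by (rule continuous_on_cong[THEN iffD1, rotated 2]) (use c in \<open>auto simp: rho_LINT[OF assms]\<close>)
  qed
  then show "isCont (rho_uexp \<nu> k) x0"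
    using continuous_on_eq_continuous_at[of "{c<..}"] c by auto
qed

lemma rho_meas[measurable]: assumes "\<nu> \<ge> 0"
  shows "(\<lambda>x. indicator {0<..} x * rho_uexp \<nu> k x) \<in> borel_measurable borel"
  using borel_measurable_continuous_on_indicator[OF _ rho_cont[OF assms], of k] by simp

definition Mk :: "real \<Rightarrow> nat \<Rightarrow> real \<Rightarrow> real" where
  "Mk \<nu> k s = Gamma (\<nu> + s) * Gamma s ^ k"

lemma Mk_nonneg: "\<nu> \<ge> 0 \<Longrightarrow> s > 0 \<Longrightarrow> Mk \<nu> k s \<ge> 0"
  unfolding Mk_def by (intro mult_nonneg_nonneg zero_le_power less_imp_le Gamma_real_pos) auto

lemma Gamma_nn: assumes "s > 0"
  shows "(\<integral>\<^sup>+ t. ennreal (indicator {0<..} t * t powr (s - 1) * exp (- t)) \<partial>lborel) = ennreal (Gamma s)"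
proof -
  have "Gamma s = (\<integral>\<^sup>+ t. ennreal (indicator {0..} t * t powr (s - 1) / exp t) \<partial>lborel)"
    by (rule Gamma_conv_nn_integral_real[OF assms])
  also have "\<dots> = (\<integral>\<^sup>+ t. ennreal (indicator {0<..} t * t powr (s - 1) * exp (- t)) \<partial>lborel)"
    by (intro nn_integral_cong) (auto simp: indicator_def exp_minus field_simps)
  finally show ?thesis by simp
qed

lemma moments: assumes "\<nu> \<ge> 0"
  shows "(\<forall>x>0. rho_uexp \<nu> k x \<ge> 0) \<and>
    (\<forall>s>0. (\<integral>\<^sup>+ x. ennreal (indicator {0<..} x * rho_uexp \<nu> k x * x powr (s - 1)) \<partial>lborel) = ennreal (Mk \<nu> k s))"
proof (induction k)
  case 0
  have pos: "\<forall>x>0. rho_uexp \<nu> 0 x \<ge> 0" using rho0[OF assms] by simp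
  have mom: "(\<integral>\<^sup>+ x. ennreal (indicator {0<..} x * rho_uexp \<nu> 0 x * x powr (s - 1)) \<partial>lborel) = ennreal (Mk \<nu> 0 s)"
    if s: "s > 0" for s
  proof -
    have "(\<integral>\<^sup>+ x. ennreal (indicator {0<..} x * rho_uexp \<nu> 0 x * x powr (s - 1)) \<partial>lborel)
        = (\<integral>\<^sup>+ x. ennreal (indicator {0<..} x * x powr (\<nu> + s - 1) * exp (- x)) \<partial>lborel)"
      by (intro nn_integral_cong) (auto simp: indicator_def rho0[OF assms] powr_add[symmetric] exp_minus field_simps)
    also have "\<dots> = ennreal (Gamma (\<nu> + s))" by (rule Gamma_nn) (use s assms in simp)
    finally show ?thesis by (simp add: Mk_def)
  qed
  show ?case using pos mom by blast
next
  case (Suc k)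
  note IH = Suc.IH
  note [measurable] = rho_meas[OF assms, of k]
  have conv_nn: "ennreal (rho_uexp \<nu> (Suc k) x) = (\<integral>\<^sup>+ t. ennreal (indicator {0<..} t * (rho_uexp \<nu> k (x / t) * exp (- t) / t)) \<partial>lborel)"
    and pos1: "rho_uexp \<nu> (Suc k) x \<ge> 0" if x: "x > 0" for x
  proof -
    have nn: "0 \<le> indicator {0<..} t * (rho_uexp \<nu> k (x / t) * exp (- t) / t)" for t
      using IH x by (auto simp: indicator_def intro!: divide_nonneg_pos mult_nonneg_nonneg)
    show "ennreal (rho_uexp \<nu> (Suc k) x) = (\<integral>\<^sup>+ t. ennreal (indicator {0<..} t * (rho_uexp \<nu> k (x / t) * exp (- t) / t)) \<partial>lborel)"
      using conv[OF assms x, of k] nn_integral_eq_integral[OF conv(1)[OF assms x, of k]] nn by simp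
    show "rho_uexp \<nu> (Suc k) x \<ge> 0"
      using conv(2)[OF assms x, of k] nn by (simp add: Bochner_Integration.integral_nonneg)
  qed
  have mom: "(\<integral>\<^sup>+ x. ennreal (indicator {0<..} x * rho_uexp \<nu> (Suc k) x * x powr (s - 1)) \<partial>lborel) = ennreal (Mk \<nu> (Suc k) s)"
    if s: "s > 0" for s
  proof -
    define H where "H = (\<lambda>x t. ennreal (indicator {0<..} x * x powr (s - 1) * indicator {0<..} t * (indicator {0<..} (x / t) * rho_uexp \<nu> k (x / t)) * exp (- t) / t))"
    have Hm: "case_prod H \<in> borel_measurable (lborel \<Otimes>\<^sub>M lborel)"
      unfolding H_def by measurable
    have step1: "(\<integral>\<^sup>+ x. ennreal (indicator {0<..} x * rho_uexp \<nu> (Suc k) x * x powr (s - 1)) \<partial>lborel)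
        = (\<integral>\<^sup>+ x. (\<integral>\<^sup>+ t. H x t \<partial>lborel) \<partial>lborel)"
    proof (intro nn_integral_cong)
      fix x :: real
      show "ennreal (indicator {0<..} x * rho_uexp \<nu> (Suc k) x * x powr (s - 1)) = (\<integral>\<^sup>+ t. H x t \<partial>lborel)"
      proof (cases "x > 0")
        case True
        have "ennreal (indicator {0<..} x * rho_uexp \<nu> (Suc k) x * x powr (s - 1))
            = ennreal (x powr (s - 1)) * ennreal (rho_uexp \<nu> (Suc k) x)"
          using True pos1[OF True] by (simp add: ennreal_mult'[symmetric] mult.commute)
        also have "\<dots> = ennreal (x powr (s - 1)) * (\<integral>\<^sup>+ t. ennreal (indicator {0<..} t * (rho_uexp \<nu> k (x / t) * exp (- t) / t)) \<partial>lborel)"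
          using conv_nn[OF True] by simp
        also have "(\<integral>\<^sup>+ t. ennreal (indicator {0<..} t * (rho_uexp \<nu> k (x / t) * exp (- t) / t)) \<partial>lborel)
           = (\<integral>\<^sup>+ t. ennreal (indicator {0<..} t * ((indicator {0<..} (x / t) * rho_uexp \<nu> k (x / t)) * exp (- t) / t)) \<partial>lborel)"
          using True by (intro nn_integral_cong) (auto simp: indicator_def)
        also have "ennreal (x powr (s - 1)) * \<dots> = (\<integral>\<^sup>+ t. ennreal (x powr (s - 1)) * ennreal (indicator {0<..} t * ((indicator {0<..} (x / t) * rho_uexp \<nu> k (x / t)) * exp (- t) / t)) \<partial>lborel)"
          by (rule nn_integral_cmult[symmetric]) measurable
        also have "\<dots> = (\<integral>\<^sup>+ t. H x t \<partial>lborel)"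
          using True IH
          by (intro nn_integral_cong) (auto simp: H_def indicator_def ennreal_mult'[symmetric] field_simps)
        finally show ?thesis .
      next
        case False
        then show ?thesis by (simp add: H_def)
      qed
    qed
    also have "\<dots> = (\<integral>\<^sup>+ t. (\<integral>\<^sup>+ x. H x t \<partial>lborel) \<partial>lborel)"
      using lborel_pair.Fubini'[OF Hm] by simp
    also have "\<dots> = (\<integral>\<^sup>+ t. ennreal (indicator {0<..} t * t powr (s - 1) * exp (- t)) * ennreal (Mk \<nu> k s) \<partial>lborel)"
    proof (intro nn_integral_cong)
      fix t :: real
      show "(\<integral>\<^sup>+ x. H x t \<partial>lborel) = ennreal (indicator {0<..} t * t powr (s - 1) * exp (- t)) * ennreal (Mk \<nu> k s)"
      proof (cases "t > 0")
        case True
        have Hm1: "H' \<in> borel_measurable borel" if "H' = (\<lambda>x. H x t)" for H'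
          unfolding that H_def by measurable
        have "(\<integral>\<^sup>+ x. H x t \<partial>lborel) = ennreal \<bar>t\<bar> * (\<integral>\<^sup>+ u. H (0 + t * u) t \<partial>lborel)"
          by (rule nn_integral_real_affine[OF Hm1[OF refl]]) (use True in simp)
        also have "(\<integral>\<^sup>+ u. H (0 + t * u) t \<partial>lborel)
            = (\<integral>\<^sup>+ u. ennreal (t powr (s - 1) * exp (- t) / t) * ennreal (indicator {0<..} u * rho_uexp \<nu> k u * u powr (s - 1)) \<partial>lborel)"
        proof (intro nn_integral_cong)
          fix u :: real
          show "H (0 + t * u) t = ennreal (t powr (s - 1) * exp (- t) / t) * ennreal (indicator {0<..} u * rho_uexp \<nu> k u * u powr (s - 1))"
          proof (cases "u > 0")
            case True
            with \<open>t > 0\<close> have tu: "t * u > 0" by simp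
            have "H (0 + t * u) t = ennreal ((t powr (s - 1) * exp (- t) / t) * (rho_uexp \<nu> k u * u powr (s - 1)))"
              using True \<open>t > 0\<close> tu by (simp add: H_def powr_mult field_simps)
            also have "\<dots> = ennreal (t powr (s - 1) * exp (- t) / t) * ennreal (indicator {0<..} u * rho_uexp \<nu> k u * u powr (s - 1))"
            proof -
              have r0: "rho_uexp \<nu> k u \<ge> 0" using IH True by blast
              have X0: "0 \<le> t powr (s - 1) * exp (- t) / t" using \<open>t > 0\<close> by simp
              have Y0: "0 \<le> indicator {0<..} u * rho_uexp \<nu> k u * u powr (s - 1)" using r0 by simp
              show ?thesis using ennreal_mult[OF X0 Y0] True by simp
            qed
            finally show ?thesis .
          next
            case False
            then have "\<not> t * u > 0" using \<open>t > 0\<close> by (simp add: zero_less_mult_iff)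
            then show ?thesis using False by (simp add: H_def)
          qed
        qed
        also have "\<dots> = ennreal (t powr (s - 1) * exp (- t) / t) * ennreal (Mk \<nu> k s)"
          using IH s by (subst nn_integral_cmult) auto
        also have "ennreal \<bar>t\<bar> * (ennreal (t powr (s - 1) * exp (- t) / t) * ennreal (Mk \<nu> k s))
            = ennreal (indicator {0<..} t * t powr (s - 1) * exp (- t)) * ennreal (Mk \<nu> k s)"
          using True by (simp add: ennreal_mult'[symmetric] mult.assoc[symmetric])
        finally show ?thesis .
      next
        case False
        then show ?thesis by (simp add: H_def)
      qed
    qed
    also have "\<dots> = ennreal (Gamma s) * ennreal (Mk \<nu> k s)"
      by (subst nn_integral_multc) (auto simp: Gamma_nn[OF s])
    also have "\<dots> = ennreal (Mk \<nu> (Suc k) s)"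
      using Gamma_real_pos[OF s] by (simp add: Mk_def ennreal_mult'[symmetric] mult_ac)
    finally show ?thesis .
  qed
  show ?case using pos1 mom by blast
qed



lemma mom_hi: assumes "\<nu> \<ge> 0" "s > 0"
  shows "((\<lambda>x. rho_uexp \<nu> k x * x powr (s - 1)) has_integral Mk \<nu> k s) {0<..}"
proof -
  note [measurable] = rho_meas[OF assms(1), of k]
  have mm: "(\<lambda>x. indicator {0<..} x * rho_uexp \<nu> k x * x powr (s - 1)) \<in> borel_measurable lborel"
    by measurable
  have nn: "AE x in lborel. 0 \<le> indicator {0<..} x * rho_uexp \<nu> k x * x powr (s - 1)"
    using moments[OF assms(1), of k] by (auto simp: indicator_def intro!: AE_I2)
  have mom: "(\<integral>\<^sup>+ x. ennreal (indicator {0<..} x * rho_uexp \<nu> k x * x powr (s - 1)) \<partial>lborel) = ennreal (Mk \<nu> k s)"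
    using moments[OF assms(1), of k] assms(2) by blast
  have "integrable lborel (\<lambda>x. indicator {0<..} x * rho_uexp \<nu> k x * x powr (s - 1)) \<and>
        (LINT x|lborel. indicator {0<..} x * rho_uexp \<nu> k x * x powr (s - 1)) = Mk \<nu> k s"
    using iffD1[OF nn_integral_eq_integrable[OF mm nn Mk_nonneg[OF assms, of k]] mom] .
  then have si: "set_integrable lborel {0<..} (\<lambda>x. rho_uexp \<nu> k x * x powr (s - 1))"
    and v: "(LINT x:{0<..}|lborel. rho_uexp \<nu> k x * x powr (s - 1)) = Mk \<nu> k s"
    by (simp_all add: set_integrable_def set_lebesgue_integral_def mult.assoc)
  show ?thesis
    using set_borel_integral_eq_integral[OF si] v by (simp add: integrable_integral)
qed

lemma theta_pow:
  assumes f: "\<And>t. t > 0 \<Longrightarrow> f t = (\<Sum>l\<le>N. c l * t powr (\<beta> + real l))" and t: "t > 0"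
  shows "theta_op f t = (\<Sum>l\<le>N. c l * (\<beta> + real l + 1) * t powr (\<beta> + 1 + real l))"
proof -
  define g where "g = (\<lambda>s. \<Sum>l\<le>N. c l * s powr (\<beta> + real l + 1))"
  have ev: "eventually (\<lambda>s. s * f s = g s) (nhds t)"
  proof -
    have "eventually (\<lambda>s. s \<in> {0<..}) (nhds t)" by (rule eventually_nhds_in_open) (use t in auto)
    then show ?thesis
    proof eventually_elim
      case (elim s)
      then show ?case
        by (simp add: f g_def sum_distrib_left powr_add mult_ac)
    qed
  qed
  have d: "(g has_real_derivative (\<Sum>l\<le>N. c l * ((\<beta> + real l + 1) * t powr (\<beta> + real l + 1 - 1)))) (at t)"
    unfolding g_def
    by (intro DERIV_sum DERIV_cmult has_real_derivative_powr t)
  have "deriv (\<lambda>s. s * f s) t = deriv g t" by (rule deriv_cong_ev[OF ev refl])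
  also have "\<dots> = (\<Sum>l\<le>N. c l * ((\<beta> + real l + 1) * t powr (\<beta> + real l + 1 - 1)))"
    by (rule DERIV_imp_deriv[OF d])
  finally have "theta_op f t = t * (\<Sum>l\<le>N. c l * ((\<beta> + real l + 1) * t powr (\<beta> + real l)))"
    by (simp add: theta_op_def)
  also have "\<dots> = (\<Sum>l\<le>N. c l * (\<beta> + real l + 1) * t powr (\<beta> + 1 + real l))"
    unfolding sum_distrib_left
  proof (intro sum.cong refl)
    fix l
    have "t * t powr (\<beta> + real l) = t powr (\<beta> + 1 + real l)"
      using t by (simp add: powr_add mult_ac)
    then show "t * (c l * ((\<beta> + real l + 1) * t powr (\<beta> + real l))) = c l * (\<beta> + real l + 1) * t powr (\<beta> + 1 + real l)"
      by (metis mult.left_commute mult.assoc)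
  qed
  finally show ?thesis .
qed

lemma theta_iter:
  assumes f: "\<And>t. t > 0 \<Longrightarrow> f t = (\<Sum>l\<le>N. c l * t powr (\<beta> + real l))"
  shows "t > 0 \<Longrightarrow> (theta_op ^^ j) f t = (\<Sum>l\<le>N. c l * pochhammer (\<beta> + real l + 1) j * t powr (\<beta> + real j + real l))"
proof (induction j arbitrary: t)
  case 0
  then show ?case using f by simp
next
  case (Suc j)
  have "(theta_op ^^ Suc j) f t = theta_op ((theta_op ^^ j) f) t" by simp
  also have "\<dots> = (\<Sum>l\<le>N. (c l * pochhammer (\<beta> + real l + 1) j) * ((\<beta> + real j) + real l + 1) * t powr ((\<beta> + real j) + 1 + real l))"
    by (rule theta_pow[OF _ Suc.prems]) (use Suc.IH in auto)
  also have "\<dots> = (\<Sum>l\<le>N. c l * pochhammer (\<beta> + real l + 1) (Suc j) * t powr (\<beta> + real (Suc j) + real l))"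
    by (intro sum.cong refl) (simp add: pochhammer_Suc algebra_simps)
  finally show ?case .
qed



lemma has_integral_dsum:
  fixes f :: "nat \<Rightarrow> nat \<Rightarrow> real \<Rightarrow> real"
  assumes "finite A" "finite B" "\<And>j l. j \<in> A \<Longrightarrow> l \<in> B \<Longrightarrow> ((\<lambda>x. f j l x) has_integral I j l) S"
  shows "((\<lambda>x. \<Sum>j\<in>A. \<Sum>l\<in>B. f j l x) has_integral (\<Sum>j\<in>A. \<Sum>l\<in>B. I j l)) S"
  using assms by (intro has_integral_sum) auto

lemma poly_theta_apply: "poly_theta P g t = (\<Sum>j\<le>degree P. coeff P j * (theta_op ^^ j) g t)"
  by (simp add: poly_theta_def)

lemma poly_theta_pow:
  assumes "t > 0"
  shows "poly_theta P (\<lambda>s. s powr \<alpha>) t = (\<Sum>l\<le>degree P. (coeff P l * pochhammer (\<alpha> + 1) l) * t powr (\<alpha> + real l))"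
proof -
  have f: "\<And>t. t > 0 \<Longrightarrow> t powr \<alpha> = (\<Sum>l\<le>0. 1 * t powr (\<alpha> + real l))" by simp
  show ?thesis
    unfolding poly_theta_def using theta_iter[OF f assms] by (simp add: mult.assoc)
qed

lemma poly_theta_pow2:
  assumes "t > 0"
  shows "poly_theta P (poly_theta R (\<lambda>s. s powr \<alpha>)) t =
    (\<Sum>j\<le>degree P. \<Sum>l\<le>degree R. coeff P j * coeff R l * pochhammer (\<alpha> + 1) (l + j) * t powr (\<alpha> + real j + real l))"
proof -
  have f: "\<And>t. t > 0 \<Longrightarrow> poly_theta R (\<lambda>s. s powr \<alpha>) t = (\<Sum>l\<le>degree R. (coeff R l * pochhammer (\<alpha> + 1) l) * t powr (\<alpha> + real l))"
    by (rule poly_theta_pow)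
  have "poly_theta P (poly_theta R (\<lambda>s. s powr \<alpha>)) t =
     (\<Sum>j\<le>degree P. coeff P j * (\<Sum>l\<le>degree R. (coeff R l * pochhammer (\<alpha> + 1) l) * pochhammer (\<alpha> + real l + 1) j * t powr (\<alpha> + real j + real l)))"
    unfolding poly_theta_apply[of P "poly_theta R (\<lambda>s. s powr \<alpha>)"] using theta_iter[OF f assms] by simp
  also have "\<dots> = (\<Sum>j\<le>degree P. \<Sum>l\<le>degree R. coeff P j * coeff R l * pochhammer (\<alpha> + 1) (l + j) * t powr (\<alpha> + real j + real l))"
    unfolding sum_distrib_left
  proof (intro sum.cong refl)
    fix j l
    have "pochhammer (\<alpha> + 1) (l + j) = pochhammer (\<alpha> + 1) l * pochhammer (\<alpha> + 1 + of_nat l) j"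
      by (rule pochhammer_product')
    also have "\<alpha> + 1 + of_nat l = \<alpha> + real l + 1" by simp
    finally have "pochhammer (\<alpha> + 1) (l + j) = pochhammer (\<alpha> + 1) l * pochhammer (\<alpha> + real l + 1) j" .
    then show "coeff P j * (coeff R l * pochhammer (\<alpha> + 1) l * pochhammer (\<alpha> + real l + 1) j * t powr (\<alpha> + real j + real l)) =
          coeff P j * coeff R l * pochhammer (\<alpha> + 1) (l + j) * t powr (\<alpha> + real j + real l)"
      by (simp add: mult_ac)
  qed
  finally show ?thesis .
qed

theorem theorem4:
  fixes k :: nat and \<nu> \<alpha> :: real and Q :: "nat \<Rightarrow> real poly"
  assumes "k \<ge> 1" and "\<nu> \<ge> 0" and "\<alpha> > -1"
  shows "(\<forall>m n. integral {0<..} (\<lambda>x. poly (Q n) x * poly (Q m) x * rho_uexp \<nu> k x * x powr \<alpha>)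
                 = (if m = n then 1 else 0))
     \<longleftrightarrow> (\<forall>m n. integral {0<..} (\<lambda>t. rho_uexp \<nu> (k - 1) t
                    * poly_theta (Q n) (poly_theta (Q m) (\<lambda>s. s powr \<alpha>)) t)
                 = (if m = n then 1 / Gamma (1 + \<alpha>) else 0))"
proof -
  obtain k' where k: "k = Suc k'" using assms(1) by (cases k) auto
  define G where "G = Gamma (1 + \<alpha>)"
  have G0: "G > 0" unfolding G_def by (rule Gamma_real_pos) (use assms(3) in simp)
  define sj where "sj = (\<lambda>j l::nat. \<alpha> + 1 + real j + real l)"
  have sj0: "sj j l > 0" for j l using assms(3) by (simp add: sj_def)
  have key: "integral {0<..} (\<lambda>x. poly (Q n) x * poly (Q m) x * rho_uexp \<nu> k x * x powr \<alpha>)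
      = G * integral {0<..} (\<lambda>t. rho_uexp \<nu> (k - 1) t * poly_theta (Q n) (poly_theta (Q m) (\<lambda>s. s powr \<alpha>)) t)"
    for n m
  proof -
    let ?a = "coeff (Q n)" and ?b = "coeff (Q m)" and ?dn = "degree (Q n)" and ?dm = "degree (Q m)"
    have hL: "((\<lambda>x. \<Sum>j\<le>?dn. \<Sum>l\<le>?dm. ?a j * ?b l * (rho_uexp \<nu> k x * x powr (sj j l - 1)))
        has_integral (\<Sum>j\<le>?dn. \<Sum>l\<le>?dm. ?a j * ?b l * Mk \<nu> k (sj j l))) {0<..}"
      by (intro has_integral_dsum has_integral_mult_right mom_hi assms(2) sj0) auto
    have hL': "((\<lambda>x. poly (Q n) x * poly (Q m) x * rho_uexp \<nu> k x * x powr \<alpha>)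
        has_integral (\<Sum>j\<le>?dn. \<Sum>l\<le>?dm. ?a j * ?b l * Mk \<nu> k (sj j l))) {0<..}"
    proof (rule has_integral_eq[OF _ hL])
      fix x :: real assume "x \<in> {0<..}"
      then have x: "x > 0" by simp
      have pw: "x powr (sj j l - 1) = x ^ j * x ^ l * x powr \<alpha>" for j l
        using x by (simp add: sj_def powr_add powr_realpow[symmetric] mult_ac)
      have pp: "poly (Q n) x * poly (Q m) x = (\<Sum>j\<le>?dn. \<Sum>l\<le>?dm. (?a j * x ^ j) * (?b l * x ^ l))"
        unfolding poly_altdef[of "Q n"] poly_altdef[of "Q m"] by (rule sum_product)
      have "poly (Q n) x * poly (Q m) x * rho_uexp \<nu> k x * x powr \<alpha>
          = (\<Sum>j\<le>?dn. \<Sum>l\<le>?dm. ((?a j * x ^ j) * (?b l * x ^ l)) * (rho_uexp \<nu> k x * x powr \<alpha>))"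
        by (simp only: pp sum_distrib_right mult.assoc)
      also have "\<dots> = (\<Sum>j\<le>?dn. \<Sum>l\<le>?dm. ?a j * ?b l * (rho_uexp \<nu> k x * x powr (sj j l - 1)))"
        unfolding pw by (intro sum.cong refl) (simp add: mult_ac)
      finally show "(\<Sum>j\<le>?dn. \<Sum>l\<le>?dm. ?a j * ?b l * (rho_uexp \<nu> k x * x powr (sj j l - 1))) =
            poly (Q n) x * poly (Q m) x * rho_uexp \<nu> k x * x powr \<alpha>" by simp
    qed
    have hR: "((\<lambda>x. \<Sum>j\<le>?dn. \<Sum>l\<le>?dm. (?a j * ?b l * pochhammer (\<alpha> + 1) (l + j)) * (rho_uexp \<nu> (k - 1) x * x powr (sj j l - 1)))
        has_integral (\<Sum>j\<le>?dn. \<Sum>l\<le>?dm. (?a j * ?b l * pochhammer (\<alpha> + 1) (l + j)) * Mk \<nu> (k - 1) (sj j l))) {0<..}"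
      by (intro has_integral_dsum has_integral_mult_right mom_hi assms(2) sj0) auto
    have hR': "((\<lambda>t. rho_uexp \<nu> (k - 1) t * poly_theta (Q n) (poly_theta (Q m) (\<lambda>s. s powr \<alpha>)) t)
        has_integral (\<Sum>j\<le>?dn. \<Sum>l\<le>?dm. (?a j * ?b l * pochhammer (\<alpha> + 1) (l + j)) * Mk \<nu> (k - 1) (sj j l))) {0<..}"
    proof (rule has_integral_eq[OF _ hR])
      fix x :: real assume "x \<in> {0<..}"
      then have x: "x > 0" by simp
      have pw: "x powr (sj j l - 1) = x powr (\<alpha> + real j + real l)" for j l
        by (simp add: sj_def add_ac)
      show "(\<Sum>j\<le>?dn. \<Sum>l\<le>?dm. (?a j * ?b l * pochhammer (\<alpha> + 1) (l + j)) * (rho_uexp \<nu> (k - 1) x * x powr (sj j l - 1))) =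
            rho_uexp \<nu> (k - 1) x * poly_theta (Q n) (poly_theta (Q m) (\<lambda>s. s powr \<alpha>)) x"
        unfolding poly_theta_pow2[OF x] sum_distrib_left pw
        by (intro sum.cong refl) (simp add: mult_ac)
    qed
    have eqv: "(\<Sum>j\<le>?dn. \<Sum>l\<le>?dm. ?a j * ?b l * Mk \<nu> k (sj j l)) =
        G * (\<Sum>j\<le>?dn. \<Sum>l\<le>?dm. (?a j * ?b l * pochhammer (\<alpha> + 1) (l + j)) * Mk \<nu> (k - 1) (sj j l))"
      unfolding sum_distrib_left
    proof (intro sum.cong refl)
      fix j l
      have "G * pochhammer (\<alpha> + 1) (l + j) = Gamma (sj j l)"
      proof -
        have nz: "\<alpha> + 1 \<notin> \<int>\<^sub>\<le>\<^sub>0" using assms(3) by (auto elim!: nonpos_Ints_cases)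
        have "pochhammer (\<alpha> + 1) (l + j) = Gamma (\<alpha> + 1 + real (l + j)) / Gamma (\<alpha> + 1)"
          by (rule pochhammer_Gamma[OF nz])
        then show ?thesis using G0 by (simp add: G_def sj_def add_ac)
      qed
      then show "?a j * ?b l * Mk \<nu> k (sj j l) = G * (?a j * ?b l * pochhammer (\<alpha> + 1) (l + j) * Mk \<nu> (k - 1) (sj j l))"
        by (simp add: Mk_def k mult_ac)
    qed
    show ?thesis using hL' hR' eqv by (simp add: integral_unique)
  qed
  show ?thesis
  proof (intro iffI allI)
    fix m n
    assume H: "\<forall>m n. integral {0<..} (\<lambda>x. poly (Q n) x * poly (Q m) x * rho_uexp \<nu> k x * x powr \<alpha>) = (if m = n then 1 else 0)"
    have h: "integral {0<..} (\<lambda>x. poly (Q n) x * poly (Q m) x * rho_uexp \<nu> k x * x powr \<alpha>) = (if m = n then 1 else 0)"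
      using H by blast
    show "integral {0<..} (\<lambda>t. rho_uexp \<nu> (k - 1) t * poly_theta (Q n) (poly_theta (Q m) (\<lambda>s. s powr \<alpha>)) t) = (if m = n then 1 / Gamma (1 + \<alpha>) else 0)"
      using h key[of n m] G0 unfolding G_def by (auto simp: field_simps)
  next
    fix m n
    assume H: "\<forall>m n. integral {0<..} (\<lambda>t. rho_uexp \<nu> (k - 1) t * poly_theta (Q n) (poly_theta (Q m) (\<lambda>s. s powr \<alpha>)) t) = (if m = n then 1 / Gamma (1 + \<alpha>) else 0)"
    have h: "integral {0<..} (\<lambda>t. rho_uexp \<nu> (k - 1) t * poly_theta (Q n) (poly_theta (Q m) (\<lambda>s. s powr \<alpha>)) t) = (if m = n then 1 / Gamma (1 + \<alpha>) else 0)"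
      using H by blast
    show "integral {0<..} (\<lambda>x. poly (Q n) x * poly (Q m) x * rho_uexp \<nu> k x * x powr \<alpha>) = (if m = n then 1 else 0)"
      using h key[of n m] G0 unfolding G_def by (auto simp: field_simps)
  qed
qed

end
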